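(* Let $0<p\leq 1$, $0\leq\omega\leq 1$, and $A\in\mathbb{R}^{m\times N}$ with $N=nd$ (block size $d$). Let $x\in\mathbb{R}^N$ be block $k$-sparse with block support $T_0$. Let $\tilde T\subset\{1,\dots,n\}$ be an arbitrary set and define $\rho,\alpha\geq0$ by $|\tilde T|=\rho k$ and $|\tilde T\cap T_0|=\alpha\rho k$. Let $s=(1+\rho-2\alpha\rho)k$ and $\gamma=\omega+(1-\omega)(s/k)^{1-p/2}$. Suppose there exists an integer $a$ with $a\geq(1-\alpha)\rho$ and $a>1$ such that $$\delta_{ak}+\frac{a^{1-p/2}}{\gamma}\delta_{(a+1)k}<\frac{a^{1-p/2}}{\gamma}-1 .$$ Then $\tilde T\in\Gamma_s(T_0)$, and $A$ satisfies the $\omega$-$d$-$p$-NSP$(k,s,C)$ for some constant $C<1$.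
   Context: Vectors $x\in\mathbb{R}^N$, $N=nd$, are split into $n$ consecutive blocks of length $d$: $x[i]=(x_{(i-1)d+1},\dots,x_{id})^T$. For $p>0$, $\lVert x\rVert_{2,p}^p=\sum_{i=1}^n\lVert x[i]\rVert_2^p$; for $v\in\mathbb{R}^m$, $\lVert v\rVert_p^p=\sum_{i=1}^m|v_i|^p$. Block $k$-sparse means at most $k$ nonzero blocks; the block support is $\{i: x[i]\neq 0\}$. For $T\subset\{1,\dots,n\}$, $h_T$ equals $h$ on the blocks indexed by $T$ and zero elsewhere, and $T^c=\{1,\dots,n\}\setminus T$. The block $p$-restricted isometry constant $\delta_k$ of $A$ is the smallest positive number such that $(1-\delta_k)\lVert z\rVert_2^p\leq\lVert Az\rVert_p^p\leq(1+\delta_k)\lVert z\rVert_2^p$ for all block $k$-sparse $z$. For $V\subset\{1,\dots,n\}$, $\Gamma_s(V)=\{U\subset\{1,\dots,n\}: |(V\cap U^c)\cup(V^c\cap U)|\leq s\}$. $A$ satisfies $\omega$-$d$-$p$-NSP$(k,s,C)$ if for every $h$ with $Ah=0$, every $T$ with $|T|\leq k$ and every $S$ with $|S|\leq s$: $\omega\lVert h_T\rVert_{2,p}^p+(1-\omega)\lVert h_S\rVert_{2,p}^p\leq C\lVert h_{T^c}\rVert_{2,p}^p$. *)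

theory Defs
  imports Complex_Main
begin

text \<open>Conventions: vectors in R^N are functions nat => real vanishing at indices >= N
  (coordinates 0..N-1); blocks are indexed 0..n-1, block i consisting of the
  coordinates i*d .. i*d+d-1.  An m x N matrix is a function nat => nat => real
  of which only entries (i,j) with i < m, j < N are used.\<close>

definition in_Rn :: "nat \<Rightarrow> (nat \<Rightarrow> real) \<Rightarrow> bool" where
  "in_Rn N z \<longleftrightarrow> (\<forall>j\<ge>N. z j = 0)"

definition mat_vec :: "nat \<Rightarrow> nat \<Rightarrow> (nat \<Rightarrow> nat \<Rightarrow> real) \<Rightarrow> (nat \<Rightarrow> real) \<Rightarrow> nat \<Rightarrow> real" where
  "mat_vec m N A z = (\<lambda>i. if i < m then (\<Sum>j<N. A i j * z j) else 0)"

definition blk_norm :: "nat \<Rightarrow> (nat \<Rightarrow> real) \<Rightarrow> nat \<Rightarrow> real" where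
  "blk_norm d x i = sqrt (\<Sum>j<d. (x (i * d + j))\<^sup>2)"

definition mixed_norm_p :: "nat \<Rightarrow> nat \<Rightarrow> real \<Rightarrow> (nat \<Rightarrow> real) \<Rightarrow> real" where
  "mixed_norm_p n d p x = (\<Sum>i<n. blk_norm d x i powr p)"

definition lp_norm_p :: "nat \<Rightarrow> real \<Rightarrow> (nat \<Rightarrow> real) \<Rightarrow> real" where
  "lp_norm_p m p v = (\<Sum>i<m. \<bar>v i\<bar> powr p)"

definition l2_norm :: "nat \<Rightarrow> (nat \<Rightarrow> real) \<Rightarrow> real" where
  "l2_norm N z = sqrt (\<Sum>j<N. (z j)\<^sup>2)"

definition block_supp :: "nat \<Rightarrow> nat \<Rightarrow> (nat \<Rightarrow> real) \<Rightarrow> nat set" where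
  "block_supp n d x = {i. i < n \<and> (\<exists>j<d. x (i * d + j) \<noteq> 0)}"

definition block_sparse :: "nat \<Rightarrow> nat \<Rightarrow> nat \<Rightarrow> (nat \<Rightarrow> real) \<Rightarrow> bool" where
  "block_sparse n d k x \<longleftrightarrow> in_Rn (n * d) x \<and> card (block_supp n d x) \<le> k"

definition blk_restrict :: "nat \<Rightarrow> nat set \<Rightarrow> (nat \<Rightarrow> real) \<Rightarrow> nat \<Rightarrow> real" where
  "blk_restrict d T h = (\<lambda>j. if j div d \<in> T then h j else 0)"

definition block_p_RIC :: "nat \<Rightarrow> nat \<Rightarrow> nat \<Rightarrow> real \<Rightarrow> (nat \<Rightarrow> nat \<Rightarrow> real) \<Rightarrow> nat \<Rightarrow> real" where
  "block_p_RIC m n d p A k = Inf {\<delta>. 0 < \<delta> \<and>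
     (\<forall>z. block_sparse n d k z \<longrightarrow>
        (1 - \<delta>) * l2_norm (n * d) z powr p \<le> lp_norm_p m p (mat_vec m (n * d) A z) \<and>
        lp_norm_p m p (mat_vec m (n * d) A z) \<le> (1 + \<delta>) * l2_norm (n * d) z powr p)}"

definition Gamma_s :: "nat \<Rightarrow> real \<Rightarrow> nat set \<Rightarrow> nat set set" where
  "Gamma_s n s V = {U. U \<subseteq> {..<n} \<and> real (card ((V \<inter> ({..<n} - U)) \<union> (({..<n} - V) \<inter> U))) \<le> s}"

definition weighted_NSP :: "nat \<Rightarrow> nat \<Rightarrow> nat \<Rightarrow> real \<Rightarrow> real \<Rightarrow> (nat \<Rightarrow> nat \<Rightarrow> real)
    \<Rightarrow> nat \<Rightarrow> real \<Rightarrow> real \<Rightarrow> bool" where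
  "weighted_NSP m n d p \<omega> A k s C \<longleftrightarrow>
     (\<forall>h T S. in_Rn (n * d) h \<and> (\<forall>i<m. mat_vec m (n * d) A h i = 0) \<and>
        T \<subseteq> {..<n} \<and> card T \<le> k \<and> S \<subseteq> {..<n} \<and> real (card S) \<le> s \<longrightarrow>
        \<omega> * mixed_norm_p n d p (blk_restrict d T h)
          + (1 - \<omega>) * mixed_norm_p n d p (blk_restrict d S h)
        \<le> C * mixed_norm_p n d p (blk_restrict d ({..<n} - T) h))"

end

theory Submission
  imports Defs "HOL-Analysis.Analysis"
begin

lemma holder_pow:
  fixes y :: "'a \<Rightarrow> real"
  assumes fin: "finite P" and nn: "\<And>i. i \<in> P \<Longrightarrow> 0 \<le> y i" and q: "0 < q" "q \<le> 1"
  shows "(\<Sum>i\<in>P. y i powr q) \<le> real (card P) powr (1 - q) * (\<Sum>i\<in>P. y i) powr q"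
proof (cases "(\<Sum>i\<in>P. y i) = 0")
  case True
  then have "\<forall>i\<in>P. y i = 0" using sum_nonneg_eq_0_iff[OF fin] nn by blast
  then show ?thesis by simp
next
  case False
  have Y: "(\<Sum>i\<in>P. y i) > 0" using False sum_nonneg[of P y] nn by force
  then have Pne: "P \<noteq> {}" by auto
  define r where "r = real (card P)"
  have r: "r > 0" using Pne fin by (simp add: r_def card_gt_0_iff)
  define c where "c = (\<Sum>i\<in>P. y i) / r"
  have c: "c > 0" using Y r by (simp add: c_def)
  have each: "y i powr q * c powr (1 - q) \<le> q * y i + (1 - q) * c" if "i \<in> P" for i
  proof (cases "y i = 0")
    case True then show ?thesis using c q by simp
  next
    case False
    then have "y i > 0" using nn that by force
    then show ?thesis using Youngs_inequality_0[of q "1-q" "y i" c] q c by simp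
  qed
  have "(\<Sum>i\<in>P. y i powr q) * c powr (1 - q) = (\<Sum>i\<in>P. y i powr q * c powr (1 - q))"
    by (simp add: sum_distrib_right)
  also have "\<dots> \<le> (\<Sum>i\<in>P. q * y i + (1 - q) * c)" by (rule sum_mono) (use each in auto)
  also have "\<dots> = q * (\<Sum>i\<in>P. y i) + (1 - q) * c * r"
    by (simp add: sum.distrib sum_distrib_left r_def)
  also have "\<dots> = r * c" using r by (simp add: c_def field_simps)
  finally have 1: "(\<Sum>i\<in>P. y i powr q) * c powr (1 - q) \<le> r * c" .
  have "r * c = (r powr (1 - q) * (\<Sum>i\<in>P. y i) powr q) * c powr (1 - q)"
  proof -
    have "(\<Sum>i\<in>P. y i) = r * c" using r by (simp add: c_def)
    then have "r powr (1 - q) * (\<Sum>i\<in>P. y i) powr q * c powr (1 - q)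
        = r powr (1 - q) * (r powr q * c powr q) * c powr (1 - q)"
      using r c by (simp add: powr_mult)
    also have "\<dots> = (r powr (1 - q) * r powr q) * (c powr q * c powr (1 - q))" by simp
    also have "\<dots> = r * c" using r c by (simp add: powr_add[symmetric])
    finally show ?thesis by simp
  qed
  with 1 have "(\<Sum>i\<in>P. y i powr q) * c powr (1 - q) \<le> (r powr (1 - q) * (\<Sum>i\<in>P. y i) powr q) * c powr (1 - q)"
    by simp
  then show ?thesis using c by (simp add: r_def)
qed

lemma ptri2:
  fixes x y p :: real
  assumes "0 < p" "p \<le> 1"
  shows "\<bar>x + y\<bar> powr p \<le> \<bar>x\<bar> powr p + \<bar>y\<bar> powr p"
proof -
  have key: "(a + b) powr p \<le> a powr p + b powr p" if "0 \<le> a" "0 \<le> b" for a b :: real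
  proof (cases "a + b = 0")
    case True then show ?thesis using that by simp
  next
    case False
    then have s: "a + b > 0" using that by simp
    have ta: "a / (a+b) \<le> (a/(a+b)) powr p"
      using powr_mono'[of p 1 "a/(a+b)"] assms that s by simp
    have tb: "b / (a+b) \<le> (b/(a+b)) powr p"
      using powr_mono'[of p 1 "b/(a+b)"] assms that s by simp
    have one: "a/(a+b) + b/(a+b) = 1" using s by (simp add: add_divide_distrib[symmetric])
    have "1 \<le> (a/(a+b)) powr p + (b/(a+b)) powr p"
      using ta tb one by linarith
    then have "(a+b) powr p * 1 \<le> (a+b) powr p * ((a/(a+b)) powr p + (b/(a+b)) powr p)"
      by (intro mult_left_mono) auto
    also have "\<dots> = a powr p + b powr p"
      using s that by (simp add: distrib_left powr_divide)
    finally show ?thesis by simp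
  qed
  have "\<bar>x + y\<bar> powr p \<le> (\<bar>x\<bar> + \<bar>y\<bar>) powr p"
    by (rule powr_mono2) (use assms in auto)
  also have "\<dots> \<le> \<bar>x\<bar> powr p + \<bar>y\<bar> powr p" by (rule key) auto
  finally show ?thesis .
qed

lemma ptri_sum:
  fixes p :: real
  assumes "0 < p" "p \<le> 1" "finite J"
  shows "\<bar>\<Sum>j\<in>J. f j\<bar> powr p \<le> (\<Sum>j\<in>J. \<bar>f j\<bar> powr p)"
  using assms(3)
proof (induction J rule: finite_induct)
  case empty then show ?case by simp
next
  case (insert j J)
  have "\<bar>\<Sum>i\<in>insert j J. f i\<bar> powr p = \<bar>f j + (\<Sum>i\<in>J. f i)\<bar> powr p" using insert by simp
  also have "\<dots> \<le> \<bar>f j\<bar> powr p + \<bar>\<Sum>i\<in>J. f i\<bar> powr p" by (rule ptri2) (use assms in auto)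
  also have "\<dots> \<le> \<bar>f j\<bar> powr p + (\<Sum>i\<in>J. \<bar>f i\<bar> powr p)" using insert by simp
  finally show ?case using insert by simp
qed

lemma rearr:
  fixes e :: "nat \<Rightarrow> real"
  assumes mono: "\<And>i j. i \<le> j \<Longrightarrow> j < n \<Longrightarrow> e j \<le> e i"
    and P: "P \<subseteq> {..<n}"
  shows "(\<Sum>i\<in>P. e i) \<le> (\<Sum>i<card P. e i)"
proof -
  define r where "r = card P"
  have fin: "finite P" using P finite_subset by blast
  have rn: "r \<le> n" using card_mono[OF _ P] by (simp add: r_def)
  define X where "X = P - {..<r}"
  define Y where "Y = {..<r} - P"
  have cXY: "card X = card Y"
  proof -
    have "card P = card (P \<inter> {..<r}) + card X" unfolding X_def
      using fin by (metis Diff_Diff_Int card_Diff_subset_Int finite_Int inf.cobounded2 inf_commute le_add_diff_inverse card_mono finite_lessThan Int_lower1 card_Diff_subset)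
    moreover have "card {..<r} = card (P \<inter> {..<r}) + card Y" unfolding Y_def
      by (metis Diff_Diff_Int card_Diff_subset_Int finite_Int inf.cobounded2 inf_commute le_add_diff_inverse card_mono finite_lessThan Int_lower1 card_Diff_subset Int_lower2)
    ultimately show ?thesis by (simp add: r_def)
  qed
  have "(\<Sum>i\<in>X. e i) \<le> (\<Sum>i\<in>Y. e i)"
  proof (cases "X = {}")
    case True
    then have "card Y = 0" using cXY by simp
    then have "Y = {}" by (simp add: Y_def)
    then show ?thesis using True by simp
  next
    case False
    then have "P \<noteq> {}" by (auto simp: X_def)
    then have r0: "r > 0" using fin by (simp add: r_def card_gt_0_iff)
    have "(\<Sum>i\<in>X. e i) \<le> (\<Sum>i\<in>X. e (r - 1))"
      by (rule sum_mono) (use P in \<open>auto simp: X_def intro!: mono\<close>)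
    also have "\<dots> = (\<Sum>i\<in>Y. e (r - 1))" using cXY by simp
    also have "\<dots> \<le> (\<Sum>i\<in>Y. e i)"
      by (rule sum_mono) (use rn r0 in \<open>auto simp: Y_def intro!: mono\<close>)
    finally show ?thesis .
  qed
  moreover have "(\<Sum>i\<in>P. e i) = (\<Sum>i\<in>P \<inter> {..<r}. e i) + (\<Sum>i\<in>X. e i)"
    unfolding X_def using fin by (metis Diff_Diff_Int inf_commute sum.subset_diff inf_le1 finite_Int sum_diff1 add.commute sum.Int_Diff)
  moreover have "(\<Sum>i<r. e i) = (\<Sum>i\<in>P \<inter> {..<r}. e i) + (\<Sum>i\<in>Y. e i)"
    unfolding Y_def by (metis Int_commute finite_lessThan sum.Int_Diff)
  ultimately show ?thesis by (simp add: r_def)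
qed

lemma sum_blocks:
  fixes n d :: nat and f :: "nat \<Rightarrow> real"
  shows "(\<Sum>j<n*d. f j) = (\<Sum>i<n. \<Sum>j<d. f (i*d+j))"
proof (induction n)
  case 0 then show ?case by simp
next
  case (Suc n)
  have "(\<Sum>j<Suc n*d. f j) = (\<Sum>j<n*d + d. f j)" by (simp add: add.commute)
  also have "\<dots> = (\<Sum>j<n*d. f j) + (\<Sum>j=n*d..<n*d+d. f j)" using sum.atLeastLessThan_concat[of 0 "n*d" "n*d+d" f] by (simp add: atLeast0LessThan)
  also have "(\<Sum>j=n*d..<n*d+d. f j) = (\<Sum>j<d. f (n*d+j))"
    using sum.shift_bounds_nat_ivl[of f 0 "n*d" d] by (simp add: atLeast0LessThan add.commute)
  finally show ?case using Suc by simp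
qed

lemma blk_norm_restrict:
  "blk_norm d (blk_restrict d X h) i = (if i \<in> X then blk_norm d h i else 0)"
proof (cases "d = 0")
  case True then show ?thesis by (simp add: blk_norm_def)
next
  case False
  have "(i * d + j) div d = i" if "j < d" for j using that False by simp
  then show ?thesis by (auto simp: blk_norm_def blk_restrict_def)
qed

lemma blk_norm_nonneg: "0 \<le> blk_norm d h i" by (simp add: blk_norm_def sum_nonneg)

lemma mixed_restrict:
  assumes "0 < p"
  shows "mixed_norm_p n d p (blk_restrict d X h) = (\<Sum>i\<in>X \<inter> {..<n}. blk_norm d h i powr p)"
proof -
  have "mixed_norm_p n d p (blk_restrict d X h) = (\<Sum>i<n. if i \<in> X then blk_norm d h i powr p else 0)"
    unfolding mixed_norm_p_def by (rule sum.cong) (auto simp: blk_norm_restrict)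
  also have "\<dots> = (\<Sum>i\<in>{..<n} \<inter> X. blk_norm d h i powr p)"
    by (simp add: sum.inter_restrict)
  finally show ?thesis by (simp add: Int_commute)
qed

lemma l2_sq: "(\<Sum>j<n*d. (z j)\<^sup>2) = (\<Sum>i<n. (blk_norm d z i)\<^sup>2)"
proof -
  have "(\<Sum>j<n*d. (z j)\<^sup>2) = (\<Sum>i<n. \<Sum>j<d. (z (i*d+j))\<^sup>2)" by (rule sum_blocks)
  also have "\<dots> = (\<Sum>i<n. (blk_norm d z i)\<^sup>2)"
    by (simp add: blk_norm_def sum_nonneg)
  finally show ?thesis .
qed

lemma l2_powr: "l2_norm (n*d) z powr p = (\<Sum>i<n. (blk_norm d z i)\<^sup>2) powr (p/2)"
proof -
  have "l2_norm (n*d) z = sqrt ((\<Sum>i<n. (blk_norm d z i)\<^sup>2))"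
    unfolding l2_norm_def l2_sq ..
  also have "\<dots> = (\<Sum>i<n. (blk_norm d z i)\<^sup>2) powr (1/2)" by (simp add: powr_half_sqrt sum_nonneg)
  finally show ?thesis by (simp add: powr_powr sum_nonneg)
qed

lemma l2_restrict_powr:
  "l2_norm (n*d) (blk_restrict d X h) powr p = (\<Sum>i\<in>X \<inter> {..<n}. (blk_norm d h i)\<^sup>2) powr (p/2)"
proof -
  have "(\<Sum>i<n. (blk_norm d (blk_restrict d X h) i)\<^sup>2) = (\<Sum>i<n. if i \<in> X then (blk_norm d h i)\<^sup>2 else 0)"
    by (rule sum.cong) (auto simp: blk_norm_restrict)
  also have "\<dots> = (\<Sum>i\<in>{..<n} \<inter> X. (blk_norm d h i)\<^sup>2)"
    by (simp add: sum.inter_restrict)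
  finally show ?thesis using l2_powr by (metis Int_commute)
qed

lemma restrict_sparse:
  assumes "X \<subseteq> {..<n}" "card X \<le> K" "in_Rn (n*d) h"
  shows "block_sparse n d K (blk_restrict d X h)"
proof -
  have "in_Rn (n*d) (blk_restrict d X h)" using assms(3) by (simp add: in_Rn_def blk_restrict_def)
  moreover have "block_supp n d (blk_restrict d X h) \<subseteq> X"
  proof
    fix i assume "i \<in> block_supp n d (blk_restrict d X h)"
    then obtain j where "j < d" "blk_restrict d X h (i*d+j) \<noteq> 0" by (auto simp: block_supp_def)
    then have "(i*d+j) div d \<in> X" by (auto simp: blk_restrict_def split: if_splits)
    moreover have "(i*d+j) div d = i" using \<open>j<d\<close> by simp
    ultimately show "i \<in> X" by simp
  qed
  then have "card (block_supp n d (blk_restrict d X h)) \<le> card X"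
    using assms(1) by (meson card_mono finite_lessThan finite_subset)
  ultimately show ?thesis using assms(2) by (simp add: block_sparse_def)
qed

lemma lp_nonneg: "0 \<le> lp_norm_p m p v" by (simp add: lp_norm_p_def sum_nonneg)

lemma ric_props:
  fixes p :: real
  assumes p: "0 < p"
  shows "0 \<le> block_p_RIC m n d p A K"
    and "block_sparse n d K z \<Longrightarrow>
      (1 - block_p_RIC m n d p A K) * l2_norm (n*d) z powr p \<le> lp_norm_p m p (mat_vec m (n*d) A z)"
    and "block_sparse n d K z \<Longrightarrow>
      lp_norm_p m p (mat_vec m (n*d) A z) \<le> (1 + block_p_RIC m n d p A K) * l2_norm (n*d) z powr p"
proof -
  define N where "N = n * d"
  define SS where "SS = {\<delta>. 0 < \<delta> \<and>
     (\<forall>z. block_sparse n d K z \<longrightarrow>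
        (1 - \<delta>) * l2_norm N z powr p \<le> lp_norm_p m p (mat_vec m N A z) \<and>
        lp_norm_p m p (mat_vec m N A z) \<le> (1 + \<delta>) * l2_norm N z powr p)}"
  have ric: "block_p_RIC m n d p A K = Inf SS" by (simp add: block_p_RIC_def SS_def N_def)
  define M where "M = (\<Sum>i<m. (\<Sum>j<N. \<bar>A i j\<bar>) powr p)"
  have M0: "0 \<le> M" by (simp add: M_def sum_nonneg)
  have bound: "lp_norm_p m p (mat_vec m N A z) \<le> M * l2_norm N z powr p" for z
  proof -
    define L where "L = l2_norm N z"
    have zj: "\<bar>z j\<bar> \<le> L" if "j < N" for j
    proof -
      have "(z j)\<^sup>2 \<le> (\<Sum>i<N. (z i)\<^sup>2)"
        by (rule member_le_sum) (use that in auto)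
      then have "sqrt ((z j)\<^sup>2) \<le> L" unfolding L_def l2_norm_def by (rule real_sqrt_le_mono)
      then show ?thesis by simp
    qed
    have L0: "0 \<le> L" by (simp add: L_def l2_norm_def sum_nonneg)
    have "\<bar>mat_vec m N A z i\<bar> powr p \<le> (\<Sum>j<N. \<bar>A i j\<bar>) powr p * L powr p" if "i < m" for i
    proof -
      have "\<bar>mat_vec m N A z i\<bar> \<le> (\<Sum>j<N. \<bar>A i j * z j\<bar>)"
        using that by (simp add: mat_vec_def sum_abs)
      also have "\<dots> \<le> (\<Sum>j<N. \<bar>A i j\<bar> * L)"
        by (rule sum_mono) (auto simp: abs_mult intro!: mult_left_mono zj)
      finally have "\<bar>mat_vec m N A z i\<bar> powr p \<le> ((\<Sum>j<N. \<bar>A i j\<bar>) * L) powr p"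
        using p by (intro powr_mono2) (auto simp: sum_distrib_right)
      then show ?thesis using L0 by (simp add: powr_mult sum_nonneg)
    qed
    then have "lp_norm_p m p (mat_vec m N A z) \<le> (\<Sum>i<m. (\<Sum>j<N. \<bar>A i j\<bar>) powr p * L powr p)"
      unfolding lp_norm_p_def by (intro sum_mono) auto
    then show ?thesis by (simp add: M_def L_def sum_distrib_right)
  qed
  have mem: "M + 1 \<in> SS"
  proof -
    have "(1 - (M + 1)) * l2_norm N z powr p \<le> lp_norm_p m p (mat_vec m N A z)" for z
    proof -
      have "(1 - (M + 1)) * l2_norm N z powr p \<le> 0" using M0 by (simp add: mult_nonpos_nonneg)
      then show ?thesis using lp_nonneg[of m p] by (meson order_trans)
    qed
    moreover have "lp_norm_p m p (mat_vec m N A z) \<le> (1 + (M + 1)) * l2_norm N z powr p" for z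
      using bound[of z] by (smt (verit) mult_right_mono powr_ge_zero)
    ultimately show ?thesis using M0 by (simp add: SS_def)
  qed
  have ne: "SS \<noteq> {}" using mem by blast
  have bdd: "bdd_below SS" by (rule bdd_belowI[of _ 0]) (auto simp: SS_def)
  show "0 \<le> block_p_RIC m n d p A K" unfolding ric
    by (rule cInf_greatest[OF ne]) (auto simp: SS_def)
  assume sp: "block_sparse n d K z"
  define L where "L = l2_norm N z powr p"
  define Y where "Y = lp_norm_p m p (mat_vec m N A z)"
  have L0: "0 \<le> L" by (simp add: L_def)
  have Y0: "0 \<le> Y" by (simp add: Y_def lp_nonneg)
  have inS: "(1 - \<delta>) * L \<le> Y \<and> Y \<le> (1 + \<delta>) * L" if "\<delta> \<in> SS" for \<delta>
    using that sp by (simp add: SS_def L_def Y_def)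
  show "(1 - block_p_RIC m n d p A K) * l2_norm (n*d) z powr p \<le> lp_norm_p m p (mat_vec m (n*d) A z)"
  proof (cases "L = 0")
    case True then show ?thesis using Y0 by (simp add: L_def Y_def N_def)
  next
    case False
    then have Lp: "L > 0" using L0 by simp
    have "1 - Y / L \<le> Inf SS"
    proof (rule cInf_greatest[OF ne])
      fix \<delta> assume "\<delta> \<in> SS"
      then have "(1 - \<delta>) * L \<le> Y" using inS by blast
      then show "1 - Y / L \<le> \<delta>" using Lp by (simp add: field_simps)
    qed
    then have "(1 - Inf SS) * L \<le> Y" using Lp by (simp add: field_simps)
    then show ?thesis by (simp add: ric L_def Y_def N_def)
  qed
  show "lp_norm_p m p (mat_vec m (n*d) A z) \<le> (1 + block_p_RIC m n d p A K) * l2_norm (n*d) z powr p"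
  proof (cases "L = 0")
    case True
    then have "Y \<le> 0" using inS[OF mem] by simp
    then show ?thesis using True by (simp add: L_def Y_def N_def)
  next
    case False
    then have Lp: "L > 0" using L0 by simp
    have "Y / L - 1 \<le> Inf SS"
    proof (rule cInf_greatest[OF ne])
      fix \<delta> assume "\<delta> \<in> SS"
      then have "Y \<le> (1 + \<delta>) * L" using inS by blast
      then show "Y / L - 1 \<le> \<delta>" using Lp by (simp add: field_simps)
    qed
    then have "Y \<le> (1 + Inf SS) * L" using Lp by (simp add: field_simps)
    then show ?thesis by (simp add: ric L_def Y_def N_def)
  qed
qed

lemma exists_sorted_enum:
  fixes w :: "nat \<Rightarrow> real"
  obtains \<sigma> where "bij_betw \<sigma> {..<n} {..<n}" "\<And>i j. i \<le> j \<Longrightarrow> j < n \<Longrightarrow> w (\<sigma> j) \<le> w (\<sigma> i)"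
proof -
  define l where "l = sort_key (\<lambda>b. - w b) [0..<n]"
  have ms: "mset l = mset [0..<n]" by (simp add: l_def)
  then have dl: "distinct l" by (metis distinct_upt mset_eq_imp_distinct_iff)
  have sl: "set l = {..<n}" using ms by (metis atLeast_upt set_mset_mset)
  have ll: "length l = n" using ms by (metis length_upt minus_nat.diff_0 size_mset)
  have so: "sorted (map (\<lambda>b. - w b) l)" by (simp add: l_def)
  have "bij_betw ((!) l) {..<n} {..<n}" using bij_betw_nth[OF dl] ll sl by simp
  moreover have "w (l ! j) \<le> w (l ! i)" if "i \<le> j" "j < n" for i j
    using sorted_nth_mono[OF so that(1)] that ll by simp
  ultimately show ?thesis using that by blast
qed

lemma mat_vec_add:
  assumes "\<And>j. j < N \<Longrightarrow> z j = u j + v j"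
  shows "mat_vec m N A z i = mat_vec m N A u i + mat_vec m N A v i"
  using assms by (simp add: mat_vec_def distrib_left sum.distrib)

lemma mat_vec_sum:
  assumes "finite J" "\<And>x. x < N \<Longrightarrow> z x = (\<Sum>j\<in>J. f j x)"
  shows "mat_vec m N A z = (\<lambda>i. \<Sum>j\<in>J. mat_vec m N A (f j) i)"
proof
  fix i
  show "mat_vec m N A z i = (\<Sum>j\<in>J. mat_vec m N A (f j) i)"
  proof (cases "i < m")
    case True
    have "mat_vec m N A z i = (\<Sum>x<N. \<Sum>j\<in>J. A i x * f j x)"
      using True assms(2) by (simp add: mat_vec_def sum_distrib_left)
    also have "\<dots> = (\<Sum>j\<in>J. \<Sum>x<N. A i x * f j x)" by (rule sum.swap)
    finally show ?thesis using True by (simp add: mat_vec_def)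
  qed (simp add: mat_vec_def)
qed

lemma lp_sum_le:
  assumes "finite J" "0 < p" "p \<le> 1"
  shows "lp_norm_p m p (\<lambda>i. \<Sum>j\<in>J. g j i) \<le> (\<Sum>j\<in>J. lp_norm_p m p (g j))"
proof -
  have "lp_norm_p m p (\<lambda>i. \<Sum>j\<in>J. g j i) \<le> (\<Sum>i<m. \<Sum>j\<in>J. \<bar>g j i\<bar> powr p)"
    unfolding lp_norm_p_def by (intro sum_mono ptri_sum) (use assms in auto)
  also have "\<dots> = (\<Sum>j\<in>J. lp_norm_p m p (g j))"
    unfolding lp_norm_p_def by (rule sum.swap)
  finally show ?thesis .
qed

lemma core:
  fixes p \<omega> s :: real and K k n d m :: nat and A :: "nat \<Rightarrow> nat \<Rightarrow> real" and h :: "nat \<Rightarrow> real"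
  assumes p: "0 < p" "p \<le> 1" and om: "0 \<le> \<omega>" "\<omega> \<le> 1"
    and k: "0 < k" and K: "0 < K" and d: "0 < d"
    and d2: "block_p_RIC m n d p A (k+K) < 1"
    and s: "0 \<le> s" "s \<le> real (k+K)"
    and hN: "in_Rn (n*d) h" and hA: "\<forall>i<m. mat_vec m (n*d) A h i = 0"
    and T: "T \<subseteq> {..<n}" "card T \<le> k" and S: "S \<subseteq> {..<n}" "real (card S) \<le> s"
  shows "\<omega> * mixed_norm_p n d p (blk_restrict d T h) + (1-\<omega>) * mixed_norm_p n d p (blk_restrict d S h)
    \<le> (\<omega> * real k powr (1-p/2) + (1-\<omega>) * s powr (1-p/2))
       * ((1 + block_p_RIC m n d p A K) / (1 - block_p_RIC m n d p A (k+K)) * real K powr (p/2-1))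
       * mixed_norm_p n d p (blk_restrict d ({..<n} - T) h)"
proof -
  define N where "N = n * d"
  define \<delta>1 where "\<delta>1 = block_p_RIC m n d p A K"
  define \<delta>2 where "\<delta>2 = block_p_RIC m n d p A (k+K)"
  have d10: "0 \<le> \<delta>1" unfolding \<delta>1_def by (rule ric_props(1)[OF p(1)])
  have d21: "\<delta>2 < 1" using d2 by (simp add: \<delta>2_def)
  define mn where "mn X = mixed_norm_p n d p (blk_restrict d X h)" for X
  define w where "w = blk_norm d h"
  have w0: "0 \<le> w b" for b by (simp add: w_def blk_norm_nonneg)
  obtain \<sigma> where bij: "bij_betw \<sigma> {..<n} {..<n}"
    and smono: "\<And>i j. i \<le> j \<Longrightarrow> j < n \<Longrightarrow> w (\<sigma> j) \<le> w (\<sigma> i)"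
    by (rule exists_sorted_enum[of n w]) (rule that)
  have inj: "inj_on \<sigma> {..<n}" using bij by (rule bij_betw_imp_inj_on)
  have img: "\<sigma> ` {..<n} = {..<n}" using bij by (rule bij_betw_imp_surj_on)
  define e where "e i = w (\<sigma> i) powr p" for i
  define v where "v i = (w (\<sigma> i))\<^sup>2" for i
  have e0: "0 \<le> e i" for i by (simp add: e_def)
  have v0: "0 \<le> v i" for i by (simp add: v_def)
  have emono: "e j \<le> e i" if "i \<le> j" "j < n" for i j
    unfolding e_def using smono[OF that] w0 p by (intro powr_mono2) auto
  have vmono: "v j \<le> v i" if "i \<le> j" "j < n" for i j
    unfolding v_def using smono[OF that] w0 by (intro power_mono) auto
  have ev: "e i = v i powr (p/2)" for i
  proof (cases "w (\<sigma> i) = 0")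
    case True then show ?thesis by (simp add: e_def v_def)
  next
    case False
    then have "w (\<sigma> i) > 0" using w0 by (simp add: order_less_le)
    then have "(w (\<sigma> i))\<^sup>2 = w (\<sigma> i) powr 2" by (simp add: powr_realpow)
    then have "v i powr (p/2) = (w (\<sigma> i) powr 2) powr (p/2)" by (simp add: v_def)
    also have "\<dots> = w (\<sigma> i) powr p" by (simp add: powr_powr)
    finally show ?thesis by (simp add: e_def)
  qed
  define pos where "pos X = {i. i < n \<and> \<sigma> i \<in> X}" for X
  have pos_sub: "pos X \<subseteq> {..<n}" for X by (auto simp: pos_def)
  have pos_img: "\<sigma> ` pos X = X" if "X \<subseteq> {..<n}" for X
  proof
    show "\<sigma> ` pos X \<subseteq> X" by (auto simp: pos_def)
    show "X \<subseteq> \<sigma> ` pos X"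
    proof
      fix b assume "b \<in> X"
      then have "b \<in> \<sigma> ` {..<n}" using that img by auto
      then obtain i where "i < n" "b = \<sigma> i" by auto
      then show "b \<in> \<sigma> ` pos X" using \<open>b \<in> X\<close> by (auto simp: pos_def)
    qed
  qed
  have reidx: "(\<Sum>b\<in>\<sigma> ` P. g b) = (\<Sum>i\<in>P. g (\<sigma> i))" if "P \<subseteq> {..<n}" for P and g :: "nat \<Rightarrow> real"
    by (rule sum.reindex_cong[where l=\<sigma>]) (use inj_on_subset[OF inj that] in auto)
  have card_pos: "card (pos X) = card X" if "X \<subseteq> {..<n}" for X
    using card_image[OF inj_on_subset[OF inj pos_sub[of X]]] pos_img[OF that] by simp
  have mem_iff: "\<sigma> i \<in> \<sigma> ` P \<longleftrightarrow> i \<in> P" if "i < n" "P \<subseteq> {..<n}" for i P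
    using inj_on_image_mem_iff[OF inj _ that(2)] that(1) by auto
  have mn_pos: "mn X = (\<Sum>i\<in>pos X. e i)" if "X \<subseteq> {..<n}" for X
  proof -
    have "mn X = (\<Sum>b\<in>X. w b powr p)"
      unfolding mn_def mixed_restrict[OF p(1)] w_def using that by (simp add: Int_absorb2)
    also have "\<dots> = (\<Sum>b\<in>\<sigma> ` pos X. w b powr p)" using pos_img[OF that] by simp
    also have "\<dots> = (\<Sum>i\<in>pos X. e i)" unfolding e_def by (rule reidx[OF pos_sub])
    finally show ?thesis .
  qed
  define R where "R = (\<Sum>i\<in>{k..<n}. e i)"
  define rT where "rT = card T"
  have rTn: "rT \<le> n" using card_mono[OF _ T(1)] by (simp add: rT_def)
  have mnT: "mn T \<le> (\<Sum>i<rT. e i)"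
    using mn_pos[OF T(1)] rearr[where e=e and n=n and P="pos T", OF emono pos_sub] card_pos[OF T(1)] by (simp add: rT_def)
  have mnTc: "R \<le> mn ({..<n} - T)"
  proof -
    have "mn ({..<n} - T) = (\<Sum>b\<in>{..<n} - T. w b powr p)"
      unfolding mn_def mixed_restrict[OF p(1)] w_def by (rule sum.cong) auto
    also have "\<dots> = (\<Sum>b<n. w b powr p) - (\<Sum>b\<in>T. w b powr p)"
      using T(1) by (simp add: sum_diff)
    also have "(\<Sum>b<n. w b powr p) = (\<Sum>i<n. e i)"
      using reidx[of "{..<n}" "\<lambda>b. w b powr p"] img by (simp add: e_def)
    also have "(\<Sum>b\<in>T. w b powr p) = mn T"
      unfolding mn_def mixed_restrict[OF p(1)] w_def using T(1) by (simp add: Int_absorb2)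
    finally have 1: "mn ({..<n} - T) = (\<Sum>i<n. e i) - mn T" .
    have 2: "(\<Sum>i<n. e i) = (\<Sum>i<rT. e i) + (\<Sum>i\<in>{rT..<n}. e i)"
      using sum.atLeastLessThan_concat[of 0 rT n e] rTn by (simp add: atLeast0LessThan)
    have 3: "R \<le> (\<Sum>i\<in>{rT..<n}. e i)"
      unfolding R_def using T(2) e0 by (intro sum_mono2) (auto simp: rT_def)
    show ?thesis using 1 2 3 mnT by linarith
  qed
  define Q where "Q = {i. i < n \<and> i < k + K}"
  have Qsub: "Q \<subseteq> {..<n}" by (auto simp: Q_def)
  define V where "V = (\<Sum>i\<in>Q. v i) powr (p/2)"
  have V0: "0 \<le> V" by (simp add: V_def)
  have pref: "(\<Sum>i<r. e i) \<le> real r powr (1 - p/2) * V" if "r \<le> n" "r \<le> k + K" for r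
  proof -
    have "(\<Sum>i<r. e i) = (\<Sum>i<r. v i powr (p/2))" by (simp add: ev)
    also have "\<dots> \<le> real (card {..<r}) powr (1 - p/2) * (\<Sum>i<r. v i) powr (p/2)"
      by (rule holder_pow) (use p v0 in auto)
    also have "\<dots> \<le> real r powr (1 - p/2) * V"
    proof -
      have "sum v {..<r} \<le> sum v Q" by (rule sum_mono2) (use that v0 in \<open>auto simp: Q_def\<close>)
      then have "sum v {..<r} powr (p/2) \<le> V" unfolding V_def
        by (rule powr_mono2[rotated 2]) (use p v0 in \<open>auto intro: sum_nonneg\<close>)
      then show ?thesis by (simp add: mult_left_mono)
    qed
    finally show ?thesis .
  qed
  have kpos: "0 \<le> 1 - p/2" using p by simp
  have bT: "mn T \<le> real k powr (1 - p/2) * V"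
  proof -
    have "mn T \<le> real rT powr (1 - p/2) * V" using mnT pref[of rT] rTn T(2) by (simp add: rT_def)
    also have "\<dots> \<le> real k powr (1 - p/2) * V"
      using T(2) kpos V0 by (intro mult_right_mono powr_mono2) (auto simp: rT_def)
    finally show ?thesis .
  qed
  have bS: "mn S \<le> s powr (1 - p/2) * V"
  proof -
    define rS where "rS = card S"
    have rSn: "rS \<le> n" using card_mono[OF _ S(1)] by (simp add: rS_def)
    have rSK: "rS \<le> k + K" using S(2) s(2) by (simp add: rS_def)
    have "mn S \<le> (\<Sum>i<rS. e i)"
      using mn_pos[OF S(1)] rearr[where e=e and n=n and P="pos S", OF emono pos_sub] card_pos[OF S(1)] by (simp add: rS_def)
    also have "\<dots> \<le> real rS powr (1 - p/2) * V" using pref rSn rSK by simp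
    also have "\<dots> \<le> s powr (1 - p/2) * V"
      using S(2) kpos V0 by (intro mult_right_mono powr_mono2) (auto simp: rS_def)
    finally show ?thesis .
  qed
  define h01 where "h01 = blk_restrict d (\<sigma> ` Q) h"
  have l2sum: "l2_norm (n*d) (blk_restrict d (\<sigma> ` P) h) powr p = (\<Sum>i\<in>P. v i) powr (p/2)"
    if "P \<subseteq> {..<n}" for P
  proof -
    have sub: "\<sigma> ` P \<subseteq> {..<n}" using that img by auto
    have "l2_norm (n*d) (blk_restrict d (\<sigma> ` P) h) powr p = (\<Sum>b\<in>\<sigma> ` P. (w b)\<^sup>2) powr (p/2)"
      unfolding l2_restrict_powr w_def using sub by (simp add: Int_absorb2)
    also have "\<dots> = (\<Sum>i\<in>P. v i) powr (p/2)" unfolding v_def using reidx[OF that] by simp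
    finally show ?thesis .
  qed
  have cardimg: "card (\<sigma> ` P) \<le> card P" if "P \<subseteq> {..<n}" for P
    by (rule card_image_le) (use that in \<open>auto intro: finite_subset\<close>)
  have h01sp: "block_sparse n d (k+K) h01"
    unfolding h01_def
    by (rule restrict_sparse) (use img Qsub cardimg[OF Qsub] hN in \<open>auto simp: Q_def intro: order_trans card_mono[of "{..<k+K}", simplified]\<close>)
  have low: "(1 - \<delta>2) * V \<le> lp_norm_p m p (mat_vec m (n*d) A h01)"
    using ric_props(2)[OF p(1) h01sp] l2sum[OF Qsub] by (simp add: \<delta>2_def V_def h01_def)
  define Qr where "Qr = {i. i < n \<and> k + K \<le> i}"
  have Qrsub: "Qr \<subseteq> {..<n}" by (auto simp: Qr_def)
  define hr where "hr = blk_restrict d (\<sigma> ` Qr) h"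
  have blk_of: "\<exists>i<n. \<sigma> i = x div d" if "x < n*d" for x
  proof -
    have "x div d < n" using that d by (simp add: div_less_iff_less_mult)
    then have "x div d \<in> \<sigma> ` {..<n}" using img by simp
    then show ?thesis by auto
  qed
  have split: "h x = h01 x + hr x" if xN: "x < n*d" for x
  proof -
    obtain i where i: "i < n" "\<sigma> i = x div d" using blk_of[OF xN] by blast
    show ?thesis unfolding h01_def hr_def blk_restrict_def
      using mem_iff[OF i(1) Qsub] mem_iff[OF i(1) Qrsub] i by (auto simp: Q_def Qr_def)
  qed
  have eqlp: "lp_norm_p m p (mat_vec m (n*d) A h01) = lp_norm_p m p (mat_vec m (n*d) A hr)"
  proof -
    have "mat_vec m (n*d) A h01 i = - mat_vec m (n*d) A hr i" if "i < m" for i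
      using mat_vec_add[of "n*d" h h01 hr m A i, OF split] hA that by simp
    then show ?thesis unfolding lp_norm_p_def by (intro sum.cong) auto
  qed
  define G where "G j = {i. i < n \<and> k \<le> i \<and> (i - k) div K = j}" for j
  have Gsub: "G j \<subseteq> {..<n}" for j by (auto simp: G_def)
  have finG: "finite (G j)" for j using finite_subset[OF Gsub finite_lessThan] .
  define hj where "hj j = blk_restrict d (\<sigma> ` G j) h" for j
  have Gbounds: "k + j*K \<le> i \<and> i < k + j*K + K" if "i \<in> G j" for i j
  proof -
    have i: "k \<le> i" "(i - k) div K = j" using that by (auto simp: G_def)
    have "(i - k) div K * K + (i - k) mod K = i - k" by (rule div_mult_mod_eq)
    moreover have "(i - k) mod K < K" using K by simp
    ultimately show ?thesis using i by (simp add: mult.commute) linarith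
  qed
  have cardG: "card (G j) \<le> K" for j
  proof -
    have "G j \<subseteq> {k + j*K..<k + j*K + K}" using Gbounds by auto
    then show ?thesis using card_mono[of "{k + j*K..<k + j*K + K}" "G j"] by simp
  qed
  have hrsum: "hr x = (\<Sum>j\<in>{1..n}. hj j x)" if xN: "x < n*d" for x
  proof -
    obtain i where i: "i < n" "\<sigma> i = x div d" using blk_of[OF xN] by blast
    have hjx: "hj j x = (if k \<le> i \<and> j = (i - k) div K then h x else 0)" for j
      unfolding hj_def blk_restrict_def using mem_iff[OF i(1) Gsub[of j]] i by (auto simp: G_def)
    have hrx: "hr x = (if k + K \<le> i then h x else 0)"
      unfolding hr_def blk_restrict_def using mem_iff[OF i(1) Qrsub] i by (auto simp: Qr_def)
    show ?thesis
    proof (cases "k \<le> i")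
      case False
      then show ?thesis using hjx hrx by simp
    next
      case True
      have "(\<Sum>j\<in>{1..n}. hj j x) = (\<Sum>j\<in>{1..n}. if (i - k) div K = j then h x else 0)"
        using hjx True by (intro sum.cong) auto
      also have "\<dots> = (if (i - k) div K \<in> {1..n} then h x else 0)" by simp
      also have "((i - k) div K \<in> {1..n}) = (k + K \<le> i)"
      proof -
        have "(i - k) div K \<le> n" using i(1) by (meson div_le_dividend diff_le_self le_trans less_imp_le)
        moreover have "(1 \<le> (i - k) div K) = (K \<le> i - k)" using K by (simp add: div_greater_zero_iff Suc_le_eq)
        ultimately show ?thesis using True by auto
      qed
      finally show ?thesis using hrx by simp
    qed
  qed
  have mvsum: "mat_vec m (n*d) A hr = (\<lambda>i. \<Sum>j\<in>{1..n}. mat_vec m (n*d) A (hj j) i)"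
    by (rule mat_vec_sum) (use hrsum in auto)
  have hjsp: "block_sparse n d K (hj j)" for j
    unfolding hj_def
    by (rule restrict_sparse) (use img Gsub[of j] le_trans[OF cardimg[OF Gsub[of j]] cardG[of j]] hN in auto)
  have gstep: "(\<Sum>i\<in>G j. v i) powr (p/2) \<le> real K powr (p/2 - 1) * (\<Sum>i\<in>G (j - 1). e i)" if "1 \<le> j" for j
  proof (cases "G j = {}")
    case True then show ?thesis by (simp add: sum_nonneg e0)
  next
    case False
    then obtain i1 where i1: "i1 \<in> G j" by blast
    have i1b: "k + j*K \<le> i1" "i1 < n" using Gbounds[OF i1] i1 by (auto simp: G_def)
    define i0 where "i0 = k + j*K - 1"
    have i0n: "i0 < n" using i1b K that k by (simp add: i0_def)
    define c where "c = w (\<sigma> i0)"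
    have c0: "0 \<le> c" by (simp add: c_def w0)
    have vc: "v i \<le> c\<^sup>2" if "i \<in> G j" for i
    proof -
      have "i0 \<le> i" "i < n" using Gbounds[OF that] that by (auto simp: i0_def G_def)
      then show ?thesis using vmono by (simp add: v_def c_def)
    qed
    have "(\<Sum>i\<in>G j. v i) \<le> (\<Sum>i\<in>G j. c\<^sup>2)" by (rule sum_mono) (use vc in auto)
    also have "\<dots> = real (card (G j)) * c\<^sup>2" by simp
    also have "\<dots> \<le> real K * c\<^sup>2" using cardG[of j] by (simp add: mult_right_mono)
    finally have s1: "(\<Sum>i\<in>G j. v i) \<le> real K * c\<^sup>2" .
    have "(\<Sum>i\<in>G j. v i) powr (p/2) \<le> (real K * c\<^sup>2) powr (p/2)"
      using s1 p by (intro powr_mono2) (auto simp: sum_nonneg v0)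
    also have "\<dots> = real K powr (p/2) * c powr p"
    proof -
      have "(c\<^sup>2) powr (p/2) = c powr p"
      proof (cases "c = 0")
        case False
        then have "c > 0" using c0 by simp
        then have "c\<^sup>2 = c powr 2" by (simp add: powr_realpow)
        then show ?thesis by (simp add: powr_powr)
      qed simp
      then show ?thesis by (simp add: powr_mult c0)
    qed
    also have "\<dots> = real K powr (p/2 - 1) * (real K * c powr p)"
      using K by (simp add: powr_diff)
    also have "\<dots> \<le> real K powr (p/2 - 1) * (\<Sum>i\<in>G (j - 1). e i)"
    proof (rule mult_left_mono)
      define I where "I = {k + (j-1)*K..<k + j*K}"
      have jK: "k + (j - 1)*K + K = k + j*K" using that by (cases j) (auto simp: algebra_simps)
      have IG: "I \<subseteq> G (j - 1)"
      proof
        fix i assume "i \<in> I"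
        then have ii: "k + (j-1)*K \<le> i" "i < k + j*K" by (auto simp: I_def)
        have "(i - k) div K = j - 1"
          by (rule div_nat_eqI) (use ii jK in \<open>auto simp: algebra_simps\<close>)
        moreover have "i < n" using ii i1b by linarith
        ultimately show "i \<in> G (j - 1)" using ii by (auto simp: G_def)
      qed
      have cI: "card I = K" using jK by (simp add: I_def)
      have "real K * c powr p = (\<Sum>i\<in>I. c powr p)" using cI by simp
      also have "\<dots> \<le> (\<Sum>i\<in>I. e i)"
      proof (rule sum_mono)
        fix i assume "i \<in> I"
        then have "i \<le> i0" using K by (auto simp: I_def i0_def)
        then show "c powr p \<le> e i" using emono[of i i0] i0n by (simp add: e_def c_def)
      qed
      also have "\<dots> \<le> (\<Sum>i\<in>G (j - 1). e i)"
        by (rule sum_mono2) (use IG e0 finG in auto)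
      finally show "real K * c powr p \<le> (\<Sum>i\<in>G (j - 1). e i)" .
    qed simp
    finally show ?thesis .
  qed
  have up: "lp_norm_p m p (mat_vec m (n*d) A hr) \<le> (1 + \<delta>1) * real K powr (p/2 - 1) * R"
  proof -
    have "lp_norm_p m p (mat_vec m (n*d) A hr) \<le> (\<Sum>j\<in>{1..n}. lp_norm_p m p (mat_vec m (n*d) A (hj j)))"
      unfolding mvsum by (rule lp_sum_le) (use p in auto)
    also have "\<dots> \<le> (\<Sum>j\<in>{1..n}. (1 + \<delta>1) * (real K powr (p/2 - 1) * (\<Sum>i\<in>G (j - 1). e i)))"
    proof (rule sum_mono)
      fix j assume j: "j \<in> {1..n}"
      have "lp_norm_p m p (mat_vec m (n*d) A (hj j)) \<le> (1 + \<delta>1) * l2_norm (n*d) (hj j) powr p"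
        using ric_props(3)[OF p(1) hjsp] by (simp add: \<delta>1_def)
      also have "l2_norm (n*d) (hj j) powr p = (\<Sum>i\<in>G j. v i) powr (p/2)"
        unfolding hj_def by (rule l2sum[OF Gsub])
      finally show "lp_norm_p m p (mat_vec m (n*d) A (hj j)) \<le> (1 + \<delta>1) * (real K powr (p/2 - 1) * (\<Sum>i\<in>G (j - 1). e i))"
        using gstep[of j] j d10 by (meson atLeastAtMost_iff mult_left_mono order_trans add_nonneg_nonneg zero_le_one)
    qed
    also have "\<dots> = (1 + \<delta>1) * real K powr (p/2 - 1) * (\<Sum>j\<in>{1..n}. \<Sum>i\<in>G (j - 1). e i)"
      by (simp add: sum_distrib_left mult.assoc)
    also have "(\<Sum>j\<in>{1..n}. \<Sum>i\<in>G (j - 1). e i) = (\<Sum>j<n. \<Sum>i\<in>G j. e i)"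
    proof -
      have "(\<Sum>j\<in>Suc ` {..<n}. \<Sum>i\<in>G (j - 1). e i) = (\<Sum>j<n. \<Sum>i\<in>G (Suc j - 1). e i)"
        by (rule sum.reindex_cong[where l=Suc]) auto
      then show ?thesis by (simp add: image_Suc_lessThan)
    qed
    also have "\<dots> = (\<Sum>i\<in>(\<Union>j<n. G j). e i)"
      by (rule sum.UNION_disjoint[symmetric]) (auto simp: G_def intro: finite_subset[OF Gsub])
    also have "\<dots> \<le> R"
      unfolding R_def by (rule sum_mono2) (auto simp: G_def e0)
    finally show ?thesis using d10 by (simp add: mult_left_mono)
  qed
  define Z where "Z = (1 + \<delta>1) / (1 - \<delta>2) * real K powr (p/2 - 1)"
  have Z0: "0 \<le> Z" using d10 d21 by (simp add: Z_def)
  have VZ: "V \<le> Z * R"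
  proof -
    have "(1 - \<delta>2) * V \<le> (1 + \<delta>1) * real K powr (p/2 - 1) * R" using low eqlp up by linarith
    then show ?thesis using d21 by (simp add: Z_def field_simps)
  qed
  define coef where "coef = \<omega> * real k powr (1-p/2) + (1-\<omega>) * s powr (1-p/2)"
  have coef0: "0 \<le> coef" using om by (simp add: coef_def)
  have "\<omega> * mn T + (1-\<omega>) * mn S \<le> \<omega> * (real k powr (1 - p/2) * V) + (1-\<omega>) * (s powr (1 - p/2) * V)"
    using bT bS om by (intro add_mono mult_left_mono) auto
  also have "\<dots> = coef * V" by (simp add: coef_def algebra_simps)
  also have "\<dots> \<le> coef * (Z * R)" using VZ coef0 by (rule mult_left_mono)
  also have "\<dots> \<le> coef * (Z * mn ({..<n} - T))"
    using mnTc Z0 coef0 by (intro mult_left_mono) auto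
  finally show ?thesis by (simp add: mn_def coef_def Z_def \<delta>1_def \<delta>2_def mult.assoc)
qed

lemma gamma_part:
  assumes "block_sparse n d k x" "T0 = block_supp n d x" "Tt \<subseteq> {..<n}"
    and "real (card Tt) = \<rho> * real k" and "real (card (Tt \<inter> T0)) = \<alpha> * \<rho> * real k"
  shows "Tt \<in> Gamma_s n ((1 + \<rho> - 2 * \<alpha> * \<rho>) * real k) T0"
proof -
  have T0sub: "T0 \<subseteq> {..<n}" using assms(2) by (auto simp: block_supp_def)
  have cT0: "card T0 \<le> k" using assms(1,2) by (simp add: block_sparse_def)
  have fin0: "finite T0" using T0sub finite_subset by blast
  have fint: "finite Tt" using assms(3) finite_subset by blast
  have D: "(T0 \<inter> ({..<n} - Tt)) \<union> (({..<n} - T0) \<inter> Tt) = (T0 - Tt) \<union> (Tt - T0)"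
    using T0sub assms(3) by auto
  have "card ((T0 - Tt) \<union> (Tt - T0)) = card (T0 - Tt) + card (Tt - T0)"
    by (rule card_Un_disjoint) (use fin0 fint in auto)
  moreover have "card (T0 - Tt) = card T0 - card (T0 \<inter> Tt)" by (rule card_Diff_subset_Int) (use fin0 in auto)
  moreover have "card (Tt - T0) = card Tt - card (Tt \<inter> T0)" by (rule card_Diff_subset_Int) (use fint in auto)
  moreover have "card (T0 \<inter> Tt) \<le> card T0" by (rule card_mono) (use fin0 in auto)
  moreover have "card (Tt \<inter> T0) \<le> card Tt" by (rule card_mono) (use fint in auto)
  ultimately have "real (card ((T0 - Tt) \<union> (Tt - T0))) = real (card T0) + real (card Tt) - 2 * real (card (Tt \<inter> T0))"
    by (simp add: Int_commute of_nat_diff)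
  also have "\<dots> \<le> (1 + \<rho> - 2 * \<alpha> * \<rho>) * real k"
    using cT0 assms(4,5) by (simp add: algebra_simps)
  finally show ?thesis using D assms(3) by (simp add: Gamma_s_def)
qed

lemma mixed_zero_d: "mixed_norm_p n 0 p z = 0"
  by (simp add: mixed_norm_p_def blk_norm_def)

lemma mixed_empty: "mixed_norm_p n d p (blk_restrict d {} h) = 0"
  by (simp add: mixed_norm_p_def blk_norm_def blk_restrict_def)

theorem theorem3:
  fixes m n d k :: nat and p \<omega> \<rho> \<alpha> :: real
    and A :: "nat \<Rightarrow> nat \<Rightarrow> real" and x :: "nat \<Rightarrow> real"
    and T0 Tt :: "nat set" and a :: nat
  assumes "0 < p" and "p \<le> 1" and "0 \<le> \<omega>" and "\<omega> \<le> 1"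
    and "block_sparse n d k x" and "T0 = block_supp n d x"
    and "Tt \<subseteq> {..<n}"
    and "0 \<le> \<rho>" and "0 \<le> \<alpha>"
    and "real (card Tt) = \<rho> * real k"
    and "real (card (Tt \<inter> T0)) = \<alpha> * \<rho> * real k"
    and "real a \<ge> (1 - \<alpha>) * \<rho>" and "a > 1"
    and "block_p_RIC m n d p A (a * k)
           + real a powr (1 - p / 2) / (\<omega> + (1 - \<omega>) * ((1 + \<rho> - 2 * \<alpha> * \<rho>) * real k / real k) powr (1 - p / 2))
             * block_p_RIC m n d p A ((a + 1) * k)
         < real a powr (1 - p / 2) / (\<omega> + (1 - \<omega>) * ((1 + \<rho> - 2 * \<alpha> * \<rho>) * real k / real k) powr (1 - p / 2)) - 1"
  shows "Tt \<in> Gamma_s n ((1 + \<rho> - 2 * \<alpha> * \<rho>) * real k) T0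
         \<and> (\<exists>C < 1. weighted_NSP m n d p \<omega> A k ((1 + \<rho> - 2 * \<alpha> * \<rho>) * real k) C)"
proof
  show "Tt \<in> Gamma_s n ((1 + \<rho> - 2 * \<alpha> * \<rho>) * real k) T0"
    by (rule gamma_part) (use assms in auto)
  define s where "s = (1 + \<rho> - 2 * \<alpha> * \<rho>) * real k"
  have "\<exists>C < 1. weighted_NSP m n d p \<omega> A k s C"
  proof (cases "d = 0 \<or> k = 0")
    case True
    have "weighted_NSP m n d p \<omega> A k s 0"
      unfolding weighted_NSP_def
    proof (intro allI impI)
      fix h T S
      assume H: "in_Rn (n * d) h \<and> (\<forall>i<m. mat_vec m (n * d) A h i = 0) \<and>
        T \<subseteq> {..<n} \<and> card T \<le> k \<and> S \<subseteq> {..<n} \<and> real (card S) \<le> s"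
      show "\<omega> * mixed_norm_p n d p (blk_restrict d T h) + (1 - \<omega>) * mixed_norm_p n d p (blk_restrict d S h)
          \<le> 0 * mixed_norm_p n d p (blk_restrict d ({..<n} - T) h)"
      proof (cases "d = 0")
        case True then show ?thesis by (simp add: mixed_zero_d)
      next
        case False
        then have k0: "k = 0" using \<open>d = 0 \<or> k = 0\<close> by simp
        have "finite T" "finite S" using H finite_subset by blast+
        then have "T = {}" "S = {}" using H k0 by (auto simp: s_def)
        then show ?thesis by (simp add: mixed_empty)
      qed
    qed
    then show ?thesis using zero_less_one by blast
  next
    case False
    then have d0: "0 < d" and k0: "0 < k" by auto
    define q where "q = 1 - p / 2"
    have q0: "0 < q" using assms(2) by (simp add: q_def)
    define \<sigma> where "\<sigma> = 1 + \<rho> - 2 * \<alpha> * \<rho>"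
    define \<gamma> where "\<gamma> = \<omega> + (1 - \<omega>) * \<sigma> powr q"
    define K where "K = a * k"
    have K0: "0 < K" using assms(13) k0 by (simp add: K_def)
    define \<delta>1 where "\<delta>1 = block_p_RIC m n d p A K"
    define \<delta>2 where "\<delta>2 = block_p_RIC m n d p A (k + K)"
    have d10: "0 \<le> \<delta>1" unfolding \<delta>1_def by (rule ric_props(1)[OF assms(1)])
    have ak: "(a + 1) * k = k + K" by (simp add: K_def)
    have sk: "\<sigma> * real k / real k = \<sigma>" using k0 by simp
    define G where "G = real a powr q / \<gamma>"
    have cond: "\<delta>1 + G * \<delta>2 < G - 1"
      using assms(14) unfolding \<delta>1_def \<delta>2_def G_def \<gamma>_def q_def K_def ak[symmetric]
      by (simp add: \<sigma>_def[symmetric] sk)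
    have g0: "0 \<le> \<gamma>" using assms(3,4) by (simp add: \<gamma>_def)
    have gpos: "0 < \<gamma>"
    proof (rule ccontr)
      assume "\<not> 0 < \<gamma>"
      then have "\<gamma> = 0" using g0 by simp
      then have "G = 0" by (simp add: G_def)
      then show False using cond d10 by simp
    qed
    have Gpos: "0 < G" using gpos assms(13) by (simp add: G_def)
    have d21: "\<delta>2 < 1"
    proof -
      have "1 + \<delta>1 < G * (1 - \<delta>2)" using cond by (simp add: algebra_simps)
      then have "0 < G * (1 - \<delta>2)" using d10 by linarith
      then show ?thesis using Gpos by (simp add: zero_less_mult_iff)
    qed
    have cards: "real (card (Tt \<inter> T0)) \<le> real k" "real (card (Tt \<inter> T0)) \<le> real (card Tt)"
    proof -
      have T0sub: "T0 \<subseteq> {..<n}" using assms(6) by (auto simp: block_supp_def)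
      have "card (Tt \<inter> T0) \<le> card T0" by (rule card_mono) (use T0sub finite_subset in auto)
      then show "real (card (Tt \<inter> T0)) \<le> real k" using assms(5,6) by (simp add: block_sparse_def)
      show "real (card (Tt \<inter> T0)) \<le> real (card Tt)" using card_mono[of Tt "Tt \<inter> T0"] finite_subset[OF assms(7)] by auto
    qed
    have s_eq: "s = real k + real (card Tt) - 2 * real (card (Tt \<inter> T0))"
      using assms(10,11) by (simp add: s_def algebra_simps)
    have s0: "0 \<le> s" using s_eq cards by linarith
    have sig0: "0 \<le> \<sigma>" using s0 k0 by (simp add: s_def \<sigma>_def zero_le_mult_iff)
    have sK: "s \<le> real (k + K)"
    proof -
      have "(1 - \<alpha>) * \<rho> * real k \<le> real a * real k" using assms(12) by (simp add: mult_right_mono)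
      then have "\<rho> * real k - \<alpha> * \<rho> * real k \<le> real K" by (simp add: K_def algebra_simps)
      moreover have "0 \<le> \<alpha> * \<rho> * real k" using assms(8,9) by simp
      ultimately show ?thesis by (simp add: s_def algebra_simps)
    qed
    define C where "C = (\<omega> * real k powr q + (1-\<omega>) * s powr q) * ((1 + \<delta>1) / (1 - \<delta>2) * real K powr (p/2-1))"
    have Ceq: "C = (1 + \<delta>1) / (1 - \<delta>2) / G"
    proof -
      have "s powr q = \<sigma> powr q * real k powr q" using sig0 by (simp add: s_def \<sigma>_def powr_mult)
      then have c1: "\<omega> * real k powr q + (1-\<omega>) * s powr q = \<gamma> * real k powr q" by (simp add: \<gamma>_def algebra_simps)
      have "real K powr (p/2-1) = inverse (real a powr q * real k powr q)"
        by (simp add: K_def q_def powr_mult powr_minus[symmetric])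
      then have c2: "\<gamma> * real k powr q * real K powr (p/2-1) = \<gamma> / real a powr q"
        using k0 by (simp add: field_simps)
      have apos: "0 < real a powr q" using assms(13) by simp
      have "C = (\<gamma> * real k powr q * real K powr (p/2-1)) * ((1 + \<delta>1) / (1 - \<delta>2))"
        unfolding C_def c1 by (simp add: algebra_simps)
      also have "\<dots> = \<gamma> / real a powr q * ((1 + \<delta>1) / (1 - \<delta>2))" by (simp only: c2)
      also have "\<dots> = (1 + \<delta>1) / (1 - \<delta>2) / G" unfolding G_def using apos gpos d21 by (simp add: field_simps)
      finally show ?thesis .
    qed
    have C1: "C < 1"
    proof -
      have "1 + \<delta>1 < G * (1 - \<delta>2)" using cond by (simp add: algebra_simps)
      then show ?thesis using Gpos d21 by (simp add: Ceq field_simps)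
    qed
    have "weighted_NSP m n d p \<omega> A k s C"
      unfolding weighted_NSP_def
    proof (intro allI impI)
      fix h T S
      assume H: "in_Rn (n * d) h \<and> (\<forall>i<m. mat_vec m (n * d) A h i = 0) \<and>
        T \<subseteq> {..<n} \<and> card T \<le> k \<and> S \<subseteq> {..<n} \<and> real (card S) \<le> s"
      have "block_p_RIC m n d p A (k + K) < 1" using d21 by (simp add: \<delta>2_def)
      from core[OF assms(1,2,3,4) k0 K0 d0 this s0 sK, of h T S] H
      show "\<omega> * mixed_norm_p n d p (blk_restrict d T h) + (1 - \<omega>) * mixed_norm_p n d p (blk_restrict d S h)
          \<le> C * mixed_norm_p n d p (blk_restrict d ({..<n} - T) h)"
        by (simp add: C_def q_def \<delta>1_def \<delta>2_def)
    qed
    then show ?thesis using C1 by blast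
  qed
  then show "\<exists>C < 1. weighted_NSP m n d p \<omega> A k ((1 + \<rho> - 2 * \<alpha> * \<rho>) * real k) C"
    by (simp add: s_def)
qed

end
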